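(* In the setting below, let $(\tilde\theta,\omega_1,\omega_2,\omega_3)$ be a type I natural SU(2)-structure on $\mathcal S$ with coefficients $b_0,b_1,b_2,c_0,c_1,c_2$, and let $\Phi_2$ be the endomorphism of $\ker\theta$ determined by $\omega_2(x,\Phi_2y)=g_{SU(2)}(x,y)$ for all $x,y\in\ker\theta$. Then $\Phi_2(V_0)\subset V_0$ if and only if $c_2=0$, and $\Phi_2(H_0)\subset H_0$ if and only if $c_0=0$. Consequently $\Phi_2$ preserves both $H_0$ and $V_0$ if and only if there exist $b_2\ne0$ and $\varepsilon\in\{1,-1\}$ with $\varepsilon b_2>0$ such that $\omega_2=b_2\alpha_2-\frac1{b_2}\alpha_0$ and $\omega_3=\varepsilon\alpha_1$.
   Context: Let $(M,g)$ be an oriented Riemannian 3-manifold, $s>0$, $\mathcal S=\{u\in TM:\|u\|=s\}$ the total space of the radius-$s$ tangent sphere bundle with the canonical (Sasaki-induced) metric. An adapted frame at $u\in\mathcal S$: take a positively oriented orthonormal frame $(f_0=u/s,f_1,f_2)$ of $T_{\pi(u)}M$ and set $e_0=f_0^h,e_1=f_1^h,e_2=f_2^h,e_3=f_1^v,e_4=f_2^v$ (horizontal and vertical lifts); dual coframe $e^0,\dots,e^4$, $e^{ij}=e^i\wedge e^j$. Globally defined: $\theta=s\,e^0$, $\alpha_0=e^{12}$, $\alpha_1=e^{14}-e^{23}$, $\alpha_2=e^{34}$, $d\theta=e^{31}+e^{42}$; $H_0=\mathrm{span}\{e_1,e_2\}$, $V_0=\mathrm{span}\{e_3,e_4\}$,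 $\ker\theta=H_0\oplus V_0$. An SU(2)-structure: $(\tilde\theta,\omega_1,\omega_2,\omega_3)$ with (C1) $\tilde\theta\wedge\omega_1\wedge\omega_1\neq0$, $\omega_i\wedge\omega_j=0$ ($i\ne j$), $\omega_1\wedge\omega_1=\omega_2\wedge\omega_2=\omega_3\wedge\omega_3=2v$, $v$ nowhere zero; (C2) $x\lrcorner\omega_1=y\lrcorner\omega_2\Rightarrow\omega_3(x,y)\ge0$. Metric on $\ker\tilde\theta$: $g_{SU(2)}$ defined by $x\lrcorner\omega_1\wedge y\lrcorner\omega_2\wedge\omega_3=g_{SU(2)}(x,y)\,v$. Type I natural SU(2)-structure: an SU(2)-structure with $\tilde\theta=-2\theta$, $\omega_1=d\theta$, $\omega_2=b_0\alpha_0+b_1\alpha_1+b_2\alpha_2$, $\omega_3=c_0\alpha_0+c_1\alpha_1+c_2\alpha_2$, real constants (equivalently $b_1^2-b_0b_2=c_1^2-c_0c_2=1$, $b_0c_2+b_2c_0-2b_1c_1=0$, $b_1c_0-b_0c_1>0$). *)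

theory Defs
  imports "HOL-Analysis.Analysis"
begin

text \<open>Pointwise (linear-algebra) model of the tangent space T_u S of the sphere bundle
at a point u, written in coordinates with respect to an adapted frame
(e_0,...,e_4): a tangent vector x is an element of real^5 with x$i the
coefficient of e_i.\<close>

type_synonym tvec = "real^5"
type_synonym form1 = "tvec \<Rightarrow> real"
type_synonym form2 = "tvec \<Rightarrow> tvec \<Rightarrow> real"
type_synonym form4 = "tvec \<Rightarrow> tvec \<Rightarrow> tvec \<Rightarrow> tvec \<Rightarrow> real"
type_synonym form5 = "tvec \<Rightarrow> tvec \<Rightarrow> tvec \<Rightarrow> tvec \<Rightarrow> tvec \<Rightarrow> real"

definition cof :: "nat \<Rightarrow> form1" where
  "cof i = (\<lambda>x. x $ (of_nat i))"

definition wedge11 :: "form1 \<Rightarrow> form1 \<Rightarrow> form2" where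
  "wedge11 a b = (\<lambda>u w. a u * b w - a w * b u)"

definition wedge22 :: "form2 \<Rightarrow> form2 \<Rightarrow> form4" where
  "wedge22 \<omega> \<eta> = (\<lambda>v1 v2 v3 v4.
      \<omega> v1 v2 * \<eta> v3 v4 - \<omega> v1 v3 * \<eta> v2 v4 + \<omega> v1 v4 * \<eta> v2 v3
    + \<omega> v2 v3 * \<eta> v1 v4 - \<omega> v2 v4 * \<eta> v1 v3 + \<omega> v3 v4 * \<eta> v1 v2)"

definition wedge14 :: "form1 \<Rightarrow> form4 \<Rightarrow> form5" where
  "wedge14 a \<Omega> = (\<lambda>v0 v1 v2 v3 v4.
      a v0 * \<Omega> v1 v2 v3 v4 - a v1 * \<Omega> v0 v2 v3 v4 + a v2 * \<Omega> v0 v1 v3 v4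
    - a v3 * \<Omega> v0 v1 v2 v4 + a v4 * \<Omega> v0 v1 v2 v3)"

definition cof2 :: "nat \<Rightarrow> nat \<Rightarrow> form2" where
  "cof2 i j = wedge11 (cof i) (cof j)"

definition scale2 :: "real \<Rightarrow> form2 \<Rightarrow> form2" where
  "scale2 c \<omega> = (\<lambda>x y. c * \<omega> x y)"

definition add2 :: "form2 \<Rightarrow> form2 \<Rightarrow> form2" where
  "add2 \<omega> \<eta> = (\<lambda>x y. \<omega> x y + \<eta> x y)"

definition theta :: "real \<Rightarrow> form1" where
  "theta s = (\<lambda>x. s * cof 0 x)"

definition alpha0 :: form2 where "alpha0 = cof2 1 2"
definition alpha1 :: form2 where "alpha1 = add2 (cof2 1 4) (scale2 (-1) (cof2 2 3))"
definition alpha2 :: form2 where "alpha2 = cof2 3 4"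
definition dtheta :: form2 where "dtheta = add2 (cof2 3 1) (cof2 4 2)"

definition kerTheta :: "real \<Rightarrow> tvec set" where
  "kerTheta s = {x. theta s x = 0}"

definition H0 :: "tvec set" where
  "H0 = {x. x $ 0 = 0 \<and> x $ 3 = 0 \<and> x $ 4 = 0}"

definition V0 :: "tvec set" where
  "V0 = {x. x $ 0 = 0 \<and> x $ 1 = 0 \<and> x $ 2 = 0}"

definition vol4 :: "form2 \<Rightarrow> form4" where
  "vol4 \<omega>1 = (\<lambda>a b c d. wedge22 \<omega>1 \<omega>1 a b c d / 2)"

definition su2_structure :: "form1 \<Rightarrow> form2 \<Rightarrow> form2 \<Rightarrow> form2 \<Rightarrow> bool" where
  "su2_structure \<theta>t \<omega>1 \<omega>2 \<omega>3 \<longleftrightarrow>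
     wedge14 \<theta>t (wedge22 \<omega>1 \<omega>1) \<noteq> (\<lambda>_ _ _ _ _. 0)
   \<and> wedge22 \<omega>1 \<omega>2 = (\<lambda>_ _ _ _. 0)
   \<and> wedge22 \<omega>2 \<omega>1 = (\<lambda>_ _ _ _. 0)
   \<and> wedge22 \<omega>1 \<omega>3 = (\<lambda>_ _ _ _. 0)
   \<and> wedge22 \<omega>3 \<omega>1 = (\<lambda>_ _ _ _. 0)
   \<and> wedge22 \<omega>2 \<omega>3 = (\<lambda>_ _ _ _. 0)
   \<and> wedge22 \<omega>3 \<omega>2 = (\<lambda>_ _ _ _. 0)
   \<and> wedge22 \<omega>1 \<omega>1 = (\<lambda>a b c d. 2 * vol4 \<omega>1 a b c d)
   \<and> wedge22 \<omega>2 \<omega>2 = (\<lambda>a b c d. 2 * vol4 \<omega>1 a b c d)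
   \<and> wedge22 \<omega>3 \<omega>3 = (\<lambda>a b c d. 2 * vol4 \<omega>1 a b c d)
   \<and> vol4 \<omega>1 \<noteq> (\<lambda>_ _ _ _. 0)
   \<and> (\<forall>x y. \<omega>1 x = \<omega>2 y \<longrightarrow> \<omega>3 x y \<ge> 0)"

definition gSU2 :: "form2 \<Rightarrow> form2 \<Rightarrow> form2 \<Rightarrow> tvec \<Rightarrow> tvec \<Rightarrow> real" where
  "gSU2 \<omega>1 \<omega>2 \<omega>3 x y =
     (THE t. wedge22 (wedge11 (\<omega>1 x) (\<omega>2 y)) \<omega>3 = (\<lambda>a b c d. t * vol4 \<omega>1 a b c d))"

definition comb :: "real \<Rightarrow> real \<Rightarrow> real \<Rightarrow> form2" where
  "comb k0 k1 k2 = (\<lambda>x y. k0 * alpha0 x y + k1 * alpha1 x y + k2 * alpha2 x y)"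

end

theory Submission imports Defs begin

lemmas U = wedge22_def wedge11_def vol4_def dtheta_def comb_def alpha0_def alpha1_def alpha2_def
  cof2_def cof_def add2_def scale2_def

definition GG :: "real\<Rightarrow>real\<Rightarrow>real\<Rightarrow>real\<Rightarrow>real\<Rightarrow>real\<Rightarrow>tvec\<Rightarrow>tvec\<Rightarrow>real" where
 "GG b0 b1 b2 c0 c1 c2 x y = (b1*c0-b0*c1)*(x$1*y$1+x$2*y$2) + (b2*c0-b1*c1)*(x$1*y$3+x$2*y$4)
   + (b1*c1-b0*c2)*(x$3*y$1+x$4*y$2) + (b2*c1-b1*c2)*(x$3*y$3+x$4*y$4)"

lemma wedge_eq:
  "wedge22 (wedge11 (dtheta x) (comb b0 b1 b2 y)) (comb c0 c1 c2)
   = (\<lambda>a b c d. GG b0 b1 b2 c0 c1 c2 x y * vol4 dtheta a b c d)"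
  apply (rule ext)+
  apply (simp only: U GG_def of_nat_numeral of_nat_1 of_nat_0)
  apply algebra
  done

abbreviation ee :: "5 \<Rightarrow> tvec" where "ee i \<equiv> axis i 1"

lemmas V = U axis_def

lemma vol_val: "vol4 dtheta (ee 1) (ee 2) (ee 3) (ee 4) = -1"
  by (simp add: V)

lemma gSU2_eq: "gSU2 dtheta (comb b0 b1 b2) (comb c0 c1 c2) x y = GG b0 b1 b2 c0 c1 c2 x y"
  unfolding gSU2_def
proof (rule the_equality)
  show "wedge22 (wedge11 (dtheta x) (comb b0 b1 b2 y)) (comb c0 c1 c2)
   = (\<lambda>a b c d. GG b0 b1 b2 c0 c1 c2 x y * vol4 dtheta a b c d)" by (rule wedge_eq)
next
  fix t assume "wedge22 (wedge11 (dtheta x) (comb b0 b1 b2 y)) (comb c0 c1 c2) =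
         (\<lambda>a b c d. t * vol4 dtheta a b c d)"
  then have "(\<lambda>a b c d. t * vol4 dtheta a b c d) = (\<lambda>a b c d. GG b0 b1 b2 c0 c1 c2 x y * vol4 dtheta a b c d)"
    by (simp add: wedge_eq)
  then have "t * vol4 dtheta (ee 1) (ee 2) (ee 3) (ee 4) = GG b0 b1 b2 c0 c1 c2 x y * vol4 dtheta (ee 1) (ee 2) (ee 3) (ee 4)"
    by meson
  then show "t = GG b0 b1 b2 c0 c1 c2 x y" by (simp add: vol_val)
qed

lemma comb_ee: "comb k0 k1 k2 (ee i) z = (if i = 1 then k0 * z$2 + k1 * z$4 else if i = 2 then - k0 * z$1 - k1*z$3
   else if i = 3 then k1 * z$2 + k2 * z$4 else if i = 4 then -k1*z$1 - k2*z$3 else 0)"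
  by (simp add: V algebra_simps)

lemma su2_consts:
  assumes "su2_structure th dtheta (comb b0 b1 b2) (comb c0 c1 c2)"
  shows "b1*b1 - b0*b2 = 1" "c1*c1 - c0*c2 = 1" "b0*c2 + b2*c0 - 2*b1*c1 = 0" "b1*c0 - b0*c1 \<ge> 0"
proof -
  have h2: "wedge22 (comb b0 b1 b2) (comb b0 b1 b2) = (\<lambda>a b c d. 2 * vol4 dtheta a b c d)"
   and h3: "wedge22 (comb c0 c1 c2) (comb c0 c1 c2) = (\<lambda>a b c d. 2 * vol4 dtheta a b c d)"
   and h23: "wedge22 (comb b0 b1 b2) (comb c0 c1 c2) = (\<lambda>_ _ _ _. 0)"
   and hC: "\<forall>x y. dtheta x = comb b0 b1 b2 y \<longrightarrow> comb c0 c1 c2 x y \<ge> 0"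
    using assms unfolding su2_structure_def by blast+
  have "wedge22 (comb b0 b1 b2) (comb b0 b1 b2) (ee 1) (ee 2) (ee 3) (ee 4) = 2 * vol4 dtheta (ee 1) (ee 2) (ee 3) (ee 4)"
    using h2 by simp
  then show "b1*b1 - b0*b2 = 1" by (simp add: V algebra_simps)
  have "wedge22 (comb c0 c1 c2) (comb c0 c1 c2) (ee 1) (ee 2) (ee 3) (ee 4) = 2 * vol4 dtheta (ee 1) (ee 2) (ee 3) (ee 4)"
    using h3 by simp
  then show "c1*c1 - c0*c2 = 1" by (simp add: V algebra_simps)
  have "wedge22 (comb b0 b1 b2) (comb c0 c1 c2) (ee 1) (ee 2) (ee 3) (ee 4) = 0"
    using h23 by simp
  then show "b0*c2 + b2*c0 - 2*b1*c1 = 0" by (simp add: V algebra_simps)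
  define x where "x = (-b1) *\<^sub>R ee 2 + b0 *\<^sub>R ee 4"
  have "dtheta x = comb b0 b1 b2 (ee 1)"
    by (rule ext) (simp add: V x_def algebra_simps)
  then have "comb c0 c1 c2 x (ee 1) \<ge> 0" using hC by blast
  then show "b1*c0 - b0*c1 \<ge> 0" by (simp add: V x_def algebra_simps)
qed

lemma ker_iff: "s > 0 \<Longrightarrow> x \<in> kerTheta s \<longleftrightarrow> x $ 0 = 0"
  by (simp add: kerTheta_def theta_def cof_def)

theorem mainTheorem14:
  fixes s b0 b1 b2 c0 c1 c2 :: real and \<Phi> :: "tvec \<Rightarrow> tvec"
  assumes "s > 0"
    and "su2_structure (\<lambda>x. -2 * theta s x) dtheta (comb b0 b1 b2) (comb c0 c1 c2)"
    and "\<forall>y \<in> kerTheta s. \<Phi> y \<in> kerTheta s"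
    and "\<forall>x \<in> kerTheta s. \<forall>y \<in> kerTheta s.
           comb b0 b1 b2 x (\<Phi> y) = gSU2 dtheta (comb b0 b1 b2) (comb c0 c1 c2) x y"
  shows "(\<Phi> ` V0 \<subseteq> V0 \<longleftrightarrow> c2 = 0)
       \<and> (\<Phi> ` H0 \<subseteq> H0 \<longleftrightarrow> c0 = 0)
       \<and> ((\<Phi> ` H0 \<subseteq> H0 \<and> \<Phi> ` V0 \<subseteq> V0) \<longleftrightarrow>
           (\<exists>b \<epsilon>. b \<noteq> 0 \<and> \<epsilon> \<in> {1, -1} \<and> \<epsilon> * b > 0
              \<and> comb b0 b1 b2 = (\<lambda>x y. b * alpha2 x y - (1 / b) * alpha0 x y)
              \<and> comb c0 c1 c2 = (\<lambda>x y. \<epsilon> * alpha1 x y)))"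
proof -
  note K = su2_consts[OF assms(2)]
  have eqs: "y $ 0 = 0 \<Longrightarrow> \<Phi> y $ 0 = 0 \<and>
      b0 * \<Phi> y $ 2 + b1 * \<Phi> y $ 4 = GG b0 b1 b2 c0 c1 c2 (ee 1) y \<and>
      - b0 * \<Phi> y $ 1 - b1 * \<Phi> y $ 3 = GG b0 b1 b2 c0 c1 c2 (ee 2) y \<and>
      b1 * \<Phi> y $ 2 + b2 * \<Phi> y $ 4 = GG b0 b1 b2 c0 c1 c2 (ee 3) y \<and>
      - b1 * \<Phi> y $ 1 - b2 * \<Phi> y $ 3 = GG b0 b1 b2 c0 c1 c2 (ee 4) y" for y
  proof -
    assume y0: "y $ 0 = 0"
    have yk: "y \<in> kerTheta s" using y0 ker_iff[OF assms(1)] by blast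
    have e: "ee i \<in> kerTheta s" if "i \<noteq> 0" for i
      using that ker_iff[OF assms(1)] by (simp add: axis_def)
    have E: "comb b0 b1 b2 (ee i) (\<Phi> y) = GG b0 b1 b2 c0 c1 c2 (ee i) y" if "i \<noteq> 0" for i
    proof -
      have "comb b0 b1 b2 (ee i) (\<Phi> y) = gSU2 dtheta (comb b0 b1 b2) (comb c0 c1 c2) (ee i) y"
        using assms(4) e[OF that] yk by blast
      then show ?thesis by (simp only: gSU2_eq)
    qed
    show ?thesis
      using E[of 1] E[of 2] E[of 3] E[of 4] assms(3) yk ker_iff[OF assms(1)]
      by (simp add: comb_ee)
  qed
  have HV: "y \<in> V0 \<Longrightarrow> \<Phi> y $ 0 = 0 \<and> \<Phi> y $ 1 = c2 * y $ 4 \<and> \<Phi> y $ 2 = - c2 * y $ 3" for y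
  proof -
    assume "y \<in> V0"
    then have y: "y $ 0 = 0" "y $ 1 = 0" "y $ 2 = 0" by (auto simp: V0_def)
    note q = eqs[OF y(1)]
    then have a: "b0 * \<Phi> y $ 2 + b1 * \<Phi> y $ 4 = (b2*c0-b1*c1) * y$3"
      "- b0 * \<Phi> y $ 1 - b1 * \<Phi> y $ 3 = (b2*c0-b1*c1) * y$4"
      "b1 * \<Phi> y $ 2 + b2 * \<Phi> y $ 4 = (b2*c1-b1*c2) * y$3"
      "- b1 * \<Phi> y $ 1 - b2 * \<Phi> y $ 3 = (b2*c1-b1*c2) * y$4"
      by (simp_all add: GG_def y axis_def)
    have "\<Phi> y $ 1 = b2*(- b0 * \<Phi> y $ 1 - b1 * \<Phi> y $ 3) - b1*(- b1 * \<Phi> y $ 1 - b2 * \<Phi> y $ 3)" using K(1) by algebra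
    also have "\<dots> = b2*((b2*c0-b1*c1) * y$4) - b1*((b2*c1-b1*c2) * y$4)" by (simp only: a)
    also have "\<dots> = c2 * y $ 4" using K(1) K(3) by algebra
    finally have r1: "\<Phi> y $ 1 = c2 * y $ 4" .
    have "\<Phi> y $ 2 = b1*(b1 * \<Phi> y $ 2 + b2 * \<Phi> y $ 4) - b2*(b0 * \<Phi> y $ 2 + b1 * \<Phi> y $ 4)" using K(1) by algebra
    also have "\<dots> = b1*((b2*c1-b1*c2) * y$3) - b2*((b2*c0-b1*c1) * y$3)" by (simp only: a)
    also have "\<dots> = - c2 * y $ 3" using K(1) K(3) by algebra
    finally have r2: "\<Phi> y $ 2 = - c2 * y $ 3" .
    show ?thesis using q r1 r2 by simp
  qed
  have H: "y \<in> H0 \<Longrightarrow> \<Phi> y $ 0 = 0 \<and> \<Phi> y $ 3 = - c0 * y $ 2 \<and> \<Phi> y $ 4 = c0 * y $ 1" for y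
  proof -
    assume "y \<in> H0"
    then have y: "y $ 0 = 0" "y $ 3 = 0" "y $ 4 = 0" by (auto simp: H0_def)
    note q = eqs[OF y(1)]
    then have a: "b0 * \<Phi> y $ 2 + b1 * \<Phi> y $ 4 = (b1*c0-b0*c1) * y$1"
      "- b0 * \<Phi> y $ 1 - b1 * \<Phi> y $ 3 = (b1*c0-b0*c1) * y$2"
      "b1 * \<Phi> y $ 2 + b2 * \<Phi> y $ 4 = (b1*c1-b0*c2) * y$1"
      "- b1 * \<Phi> y $ 1 - b2 * \<Phi> y $ 3 = (b1*c1-b0*c2) * y$2"
      by (simp_all add: GG_def y axis_def)
    have "\<Phi> y $ 3 = b0*(- b1 * \<Phi> y $ 1 - b2 * \<Phi> y $ 3) - b1*(- b0 * \<Phi> y $ 1 - b1 * \<Phi> y $ 3)" using K(1) by algebra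
    also have "\<dots> = b0*((b1*c1-b0*c2) * y$2) - b1*((b1*c0-b0*c1) * y$2)" by (simp only: a)
    also have "\<dots> = - c0 * y $ 2" using K(1) K(3) by algebra
    finally have r3: "\<Phi> y $ 3 = - c0 * y $ 2" .
    have "\<Phi> y $ 4 = b1*(b0 * \<Phi> y $ 2 + b1 * \<Phi> y $ 4) - b0*(b1 * \<Phi> y $ 2 + b2 * \<Phi> y $ 4)" using K(1) by algebra
    also have "\<dots> = b1*((b1*c0-b0*c1) * y$1) - b0*((b1*c1-b0*c2) * y$1)" by (simp only: a)
    also have "\<dots> = c0 * y $ 1" using K(1) K(3) by algebra
    finally have r4: "\<Phi> y $ 4 = c0 * y $ 1" .
    show ?thesis using q r3 r4 by simp
  qed
  have P1: "\<Phi> ` V0 \<subseteq> V0 \<longleftrightarrow> c2 = 0"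
  proof
    assume "\<Phi> ` V0 \<subseteq> V0"
    moreover have "ee 3 \<in> V0" by (simp add: V0_def axis_def)
    ultimately have "\<Phi> (ee 3) $ 2 = 0" by (auto simp: V0_def)
    with HV[of "ee 3"] \<open>ee 3 \<in> V0\<close> show "c2 = 0" by (simp add: axis_def)
  next
    assume "c2 = 0"
    then show "\<Phi> ` V0 \<subseteq> V0" using HV by (auto simp: V0_def)
  qed
  have P2: "\<Phi> ` H0 \<subseteq> H0 \<longleftrightarrow> c0 = 0"
  proof
    assume "\<Phi> ` H0 \<subseteq> H0"
    moreover have "ee 1 \<in> H0" by (simp add: H0_def axis_def)
    ultimately have "\<Phi> (ee 1) $ 4 = 0" by (auto simp: H0_def)
    with H[of "ee 1"] \<open>ee 1 \<in> H0\<close> show "c0 = 0" by (simp add: axis_def)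
  next
    assume "c0 = 0"
    then show "\<Phi> ` H0 \<subseteq> H0" using H by (auto simp: H0_def)
  qed
  have P3: "(c0 = 0 \<and> c2 = 0) \<longleftrightarrow>
           (\<exists>b \<epsilon>. b \<noteq> 0 \<and> \<epsilon> \<in> {1, -1} \<and> \<epsilon> * b > 0
              \<and> comb b0 b1 b2 = (\<lambda>x y. b * alpha2 x y - (1 / b) * alpha0 x y)
              \<and> comb c0 c1 c2 = (\<lambda>x y. \<epsilon> * alpha1 x y))"
  proof
    assume c: "c0 = 0 \<and> c2 = 0"
    then have c1: "c1 * c1 = 1" using K(2) by simp
    then have "b1 = 0" using K(3) c by algebra
    then have bb: "b0 * b2 = -1" using K(1) by simp
    then have b2: "b2 \<noteq> 0" by auto
    have b0: "b0 = - 1 / b2" using bb b2 by (simp add: field_simps)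
    have "(c1 - 1) * (c1 + 1) = 0" using c1 by algebra
    then have c1pm: "c1 \<in> {1, -1}" by auto
    have "- b0 * c1 \<ge> 0" using K(4) c \<open>b1 = 0\<close> by simp
    moreover have "c1 * b2 = (- b0 * c1) * b2^2" using bb by algebra
    ultimately have "c1 * b2 \<ge> 0" by (metis mult_nonneg_nonneg zero_le_power2)
    then have pos: "c1 * b2 > 0" using b2 c1pm by auto
    show "\<exists>b \<epsilon>. b \<noteq> 0 \<and> \<epsilon> \<in> {1, -1} \<and> \<epsilon> * b > 0
              \<and> comb b0 b1 b2 = (\<lambda>x y. b * alpha2 x y - (1 / b) * alpha0 x y)
              \<and> comb c0 c1 c2 = (\<lambda>x y. \<epsilon> * alpha1 x y)"
      apply (rule exI[of _ b2], rule exI[of _ c1])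
      using b2 c1pm pos c \<open>b1 = 0\<close> b0 by (auto simp: comb_def fun_eq_iff)
  next
    assume "\<exists>b \<epsilon>. b \<noteq> 0 \<and> \<epsilon> \<in> {1, -1} \<and> \<epsilon> * b > 0
              \<and> comb b0 b1 b2 = (\<lambda>x y. b * alpha2 x y - (1 / b) * alpha0 x y)
              \<and> comb c0 c1 c2 = (\<lambda>x y. \<epsilon> * alpha1 x y)"
    then obtain \<epsilon> where h: "comb c0 c1 c2 = (\<lambda>x y. \<epsilon> * alpha1 x y)" by blast
    have "comb c0 c1 c2 (ee 1) (ee 2) = \<epsilon> * alpha1 (ee 1) (ee 2)"
         "comb c0 c1 c2 (ee 3) (ee 4) = \<epsilon> * alpha1 (ee 3) (ee 4)" using h by simp_all
    then show "c0 = 0 \<and> c2 = 0" by (simp add: V)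
  qed
  show ?thesis using P1 P2 P3 by blast
qed

end
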